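(* Let $A\in\mathbb Z^{d\times n}$ with $\ker(A)\cap\mathbb N^n=\{0\}$ and let $B\subseteq\ker(A)$ be any subset. Then $B$ is distance reducing if and only if $B$ reduces the distance of the Graver basis $G(A)$. Similarly, $B$ is strongly distance reducing if and only if $B$ strongly reduces the distance of $G(A)$.
   Context: For $z\in\mathbb Z^n$, $z^\pm\in\mathbb N^n$ are the unique vectors with disjoint supports and $z=z^+-z^-$; $\|\cdot\|$ is the $1$-norm. The Graver basis $G(A)$ is the set of nonzero $z\in\ker(A)$ admitting no decomposition $z=u+v$ with $u,v\in\ker(A)\setminus\{0\}$, $z^+=u^++v^+$, $z^-=u^-+v^-$. For nonzero $z\in\ker(A)$ and $u\in\ker(A)$: $u$ reduces $z$ from $z^+$ if there is $\varepsilon\in\{\pm1\}$ with $z^++\varepsilon u\in\mathbb N^n$ and $\|z^++\varepsilon u-z^-\|<\|z\|$; $u$ reduces $z$ from $z^-$ if there is $\varepsilon$ with $z^-+\varepsilon u\in\mathbb N^n$ and $\|z^+-(z^-+\varepsilon u)\|<\|z\|$. $B$ reduces the distance of $Z$ if every nonzero $z\in Z$ is reduced (from $z^+$ or from $z^-$) by some $u\in B$; $B$ strongly reduces the distance of $Z$ if every nonzero $z\in Z$ is reduced from $z^+$ by some $u\in B$ and from $z^-$ by some (possibly different) $u'\in B$. $B$ is (strongly) distance reducing if it (strongly) reduces the distance of $\ker(A)$. *)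

theory Defs
  imports Main "HOL-Library.Function_Algebras"
begin

text \<open>Integer vectors of length n are modelled as functions nat => int that vanish
outside {..<n}; a d x n integer matrix A is a function nat => nat => int with A r i the
entry in row r < d and column i < n.\<close>

definition vecs :: "nat \<Rightarrow> (nat \<Rightarrow> int) set" where
  "vecs n = {z. \<forall>i\<ge>n. z i = 0}"

definition kerA :: "nat \<Rightarrow> nat \<Rightarrow> (nat \<Rightarrow> nat \<Rightarrow> int) \<Rightarrow> (nat \<Rightarrow> int) set" where
  "kerA d n A = {z \<in> vecs n. \<forall>r<d. (\<Sum>i<n. A r i * z i) = 0}"

definition natvec :: "(nat \<Rightarrow> int) \<Rightarrow> bool" where
  "natvec z \<longleftrightarrow> (\<forall>i. 0 \<le> z i)"

definition pospart :: "(nat \<Rightarrow> int) \<Rightarrow> nat \<Rightarrow> int" where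
  "pospart z = (\<lambda>i. max (z i) 0)"

definition negpart :: "(nat \<Rightarrow> int) \<Rightarrow> nat \<Rightarrow> int" where
  "negpart z = (\<lambda>i. max (- z i) 0)"

definition norm1 :: "nat \<Rightarrow> (nat \<Rightarrow> int) \<Rightarrow> int" where
  "norm1 n z = (\<Sum>i<n. \<bar>z i\<bar>)"

definition graver :: "nat \<Rightarrow> nat \<Rightarrow> (nat \<Rightarrow> nat \<Rightarrow> int) \<Rightarrow> (nat \<Rightarrow> int) set" where
  "graver d n A = {z \<in> kerA d n A. z \<noteq> 0 \<and>
     \<not> (\<exists>u v. u \<in> kerA d n A \<and> v \<in> kerA d n A \<and> u \<noteq> 0 \<and> v \<noteq> 0 \<and>
          z = u + v \<and> pospart z = pospart u + pospart v \<and> negpart z = negpart u + negpart v)}"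

definition reduces_plus :: "nat \<Rightarrow> (nat \<Rightarrow> int) \<Rightarrow> (nat \<Rightarrow> int) \<Rightarrow> bool" where
  "reduces_plus n u z \<longleftrightarrow> (\<exists>\<epsilon>::int. \<epsilon> \<in> {1, -1} \<and>
     natvec (\<lambda>i. pospart z i + \<epsilon> * u i) \<and>
     norm1 n (\<lambda>i. pospart z i + \<epsilon> * u i - negpart z i) < norm1 n z)"

definition reduces_minus :: "nat \<Rightarrow> (nat \<Rightarrow> int) \<Rightarrow> (nat \<Rightarrow> int) \<Rightarrow> bool" where
  "reduces_minus n u z \<longleftrightarrow> (\<exists>\<epsilon>::int. \<epsilon> \<in> {1, -1} \<and>
     natvec (\<lambda>i. negpart z i + \<epsilon> * u i) \<and>
     norm1 n (\<lambda>i. pospart z i - (negpart z i + \<epsilon> * u i)) < norm1 n z)"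

definition reduces_distance :: "nat \<Rightarrow> (nat \<Rightarrow> int) set \<Rightarrow> (nat \<Rightarrow> int) set \<Rightarrow> bool" where
  "reduces_distance n B Z \<longleftrightarrow>
     (\<forall>z\<in>Z. z \<noteq> 0 \<longrightarrow> (\<exists>u\<in>B. reduces_plus n u z \<or> reduces_minus n u z))"

definition strongly_reduces_distance :: "nat \<Rightarrow> (nat \<Rightarrow> int) set \<Rightarrow> (nat \<Rightarrow> int) set \<Rightarrow> bool" where
  "strongly_reduces_distance n B Z \<longleftrightarrow>
     (\<forall>z\<in>Z. z \<noteq> 0 \<longrightarrow> (\<exists>u\<in>B. reduces_plus n u z) \<and> (\<exists>u'\<in>B. reduces_minus n u' z))"

end

theory Submission
  imports Defs
begin

definition conf :: "(nat \<Rightarrow> int) \<Rightarrow> (nat \<Rightarrow> int) \<Rightarrow> bool" where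
  "conf g z \<longleftrightarrow> (\<forall>i. (0 \<le> g i \<and> g i \<le> z i) \<or> (z i \<le> g i \<and> g i \<le> 0))"

lemma conf_trans: "conf a b \<Longrightarrow> conf b c \<Longrightarrow> conf a c"
  unfolding conf_def
proof -
  assume a: "\<forall>i. 0 \<le> a i \<and> a i \<le> b i \<or> b i \<le> a i \<and> a i \<le> 0"
    and b: "\<forall>i. 0 \<le> b i \<and> b i \<le> c i \<or> c i \<le> b i \<and> b i \<le> 0"
  show "\<forall>i. 0 \<le> a i \<and> a i \<le> c i \<or> c i \<le> a i \<and> a i \<le> 0"
  proof
    fix i show "0 \<le> a i \<and> a i \<le> c i \<or> c i \<le> a i \<and> a i \<le> 0" using a[rule_format, of i] b[rule_format, of i] by linarith
  qed
qed

lemma norm1_pos: "v \<in> vecs n \<Longrightarrow> v \<noteq> 0 \<Longrightarrow> norm1 n v > 0"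
proof -
  assume v: "v \<in> vecs n" "v \<noteq> 0"
  then obtain i where i: "v i \<noteq> 0" by (auto simp: fun_eq_iff)
  have "i < n"
  proof (rule ccontr)
    assume "\<not> i < n"
    then have "n \<le> i" by simp
    with v(1) have "v i = 0" unfolding vecs_def by blast
    with i show False by simp
  qed
  have "\<bar>v i\<bar> \<le> norm1 n v" unfolding norm1_def
    by (rule member_le_sum) (use \<open>i<n\<close> in auto)
  with i show ?thesis by linarith
qed

lemma exists_graver:
  "z \<in> kerA d n A \<Longrightarrow> z \<noteq> 0 \<Longrightarrow> \<exists>g\<in>graver d n A. conf g z"
proof (induction "nat (norm1 n z)" arbitrary: z rule: less_induct)
  case less
  show ?case
  proof (cases "z \<in> graver d n A")
    case True
    then show ?thesis by (auto simp: conf_def)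
  next
    case False
    have "\<exists>u v. u \<in> kerA d n A \<and> v \<in> kerA d n A \<and> u \<noteq> 0 \<and> v \<noteq> 0 \<and>
          z = u + v \<and> pospart z = pospart u + pospart v \<and> negpart z = negpart u + negpart v"
    proof (rule ccontr)
      assume nE: "\<not> (\<exists>u v. u \<in> kerA d n A \<and> v \<in> kerA d n A \<and> u \<noteq> 0 \<and> v \<noteq> 0 \<and>
          z = u + v \<and> pospart z = pospart u + pospart v \<and> negpart z = negpart u + negpart v)"
      have "z \<in> graver d n A" unfolding graver_def using less.prems nE by (intro CollectI conjI)
      with False show False by contradiction
    qed
    then obtain u v where uv: "u \<in> kerA d n A" "v \<in> kerA d n A" "u \<noteq> 0" "v \<noteq> 0"
      "z = u + v" "pospart z = pospart u + pospart v" "negpart z = negpart u + negpart v"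
      by blast
    have pw: "\<And>i. max (z i) 0 = max (u i) 0 + max (v i) 0 \<and> max (- z i) 0 = max (- u i) 0 + max (- v i) 0"
    proof
      fix i
      have "pospart z i = pospart u i + pospart v i" "negpart z i = negpart u i + negpart v i"
        using uv(6,7) by simp_all
      then show "max (z i) 0 = max (u i) 0 + max (v i) 0" "max (- z i) 0 = max (- u i) 0 + max (- v i) 0"
        unfolding pospart_def negpart_def by simp_all
    qed
    have abs_eq: "\<And>i. \<bar>z i\<bar> = \<bar>u i\<bar> + \<bar>v i\<bar>"
    proof -
      fix i show "\<bar>z i\<bar> = \<bar>u i\<bar> + \<bar>v i\<bar>" using pw[of i] by linarith
    qed
    have "norm1 n z = norm1 n u + norm1 n v"
      unfolding norm1_def by (simp add: abs_eq sum.distrib)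
    moreover have "norm1 n v > 0" using uv(2,4) norm1_pos unfolding kerA_def by blast
    moreover have "norm1 n u \<ge> 0" unfolding norm1_def by (simp add: sum_nonneg)
    ultimately have "nat (norm1 n u) < nat (norm1 n z)" by linarith
    from less.hyps[OF this uv(1,3)] obtain g where g: "g \<in> graver d n A" "conf g u" by blast
    have "conf u z" unfolding conf_def
    proof
      fix i show "(0 \<le> u i \<and> u i \<le> z i) \<or> (z i \<le> u i \<and> u i \<le> 0)" using pw[of i] by linarith
    qed
    with g show ?thesis by (meson conf_trans)
  qed
qed

lemma pm1: "(\<lambda>i. pospart g i + w i - negpart g i) = (\<lambda>i. g i + w i)"
  by (auto simp: fun_eq_iff pospart_def negpart_def max_def)

lemma pm2: "(\<lambda>i. pospart g i - (negpart g i + w i)) = (\<lambda>i. g i + - w i)"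
  by (auto simp: fun_eq_iff pospart_def negpart_def max_def)

lemma norm_bound:
  assumes "conf g z" "norm1 n (\<lambda>i. g i + w i) < norm1 n g"
  shows "norm1 n (\<lambda>i. z i + w i) < norm1 n z"
proof -
  have c: "\<And>i. \<bar>z i\<bar> = \<bar>g i\<bar> + \<bar>z i - g i\<bar>" 
  proof -
    fix i from assms(1) have "(0 \<le> g i \<and> g i \<le> z i) \<or> (z i \<le> g i \<and> g i \<le> 0)" unfolding conf_def by blast
    then show "\<bar>z i\<bar> = \<bar>g i\<bar> + \<bar>z i - g i\<bar>" by linarith
  qed
  have "norm1 n (\<lambda>i. z i + w i) \<le> (\<Sum>i<n. \<bar>g i + w i\<bar> + \<bar>z i - g i\<bar>)"
    unfolding norm1_def by (rule sum_mono) linarith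
  also have "\<dots> = norm1 n (\<lambda>i. g i + w i) + (\<Sum>i<n. \<bar>z i - g i\<bar>)"
    unfolding norm1_def by (simp add: sum.distrib)
  also have "\<dots> < norm1 n g + (\<Sum>i<n. \<bar>z i - g i\<bar>)" using assms(2) by simp
  also have "\<dots> = norm1 n z" unfolding norm1_def by (simp add: c sum.distrib)
  finally show ?thesis .
qed

lemma red_plus: "conf g z \<Longrightarrow> reduces_plus n u g \<Longrightarrow> reduces_plus n u z"
proof -
  assume c: "conf g z" and r: "reduces_plus n u g"
  then obtain e :: int where e: "e \<in> {1,-1}" "natvec (\<lambda>i. pospart g i + e * u i)"
    "norm1 n (\<lambda>i. pospart g i + e * u i - negpart g i) < norm1 n g"
    unfolding reduces_plus_def by blast
  have "natvec (\<lambda>i. pospart z i + e * u i)"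
    unfolding natvec_def
  proof
    fix i
    from c have "(0 \<le> g i \<and> g i \<le> z i) \<or> (z i \<le> g i \<and> g i \<le> 0)" unfolding conf_def by blast
    moreover have "0 \<le> pospart g i + e * u i" using e(2) unfolding natvec_def by blast
    ultimately show "0 \<le> pospart z i + e * u i" unfolding pospart_def by linarith
  qed
  moreover have "norm1 n (\<lambda>i. pospart z i + e * u i - negpart z i) < norm1 n z"
  proof -
    have "norm1 n (\<lambda>i. g i + e * u i) < norm1 n g"
      using e(3) by (simp only: pm1 pm2)
    from norm_bound[OF c this] show ?thesis by (simp only: pm1 pm2)
  qed
  ultimately show ?thesis using e(1) unfolding reduces_plus_def by blast
qed

lemma red_minus: "conf g z \<Longrightarrow> reduces_minus n u g \<Longrightarrow> reduces_minus n u z"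
proof -
  assume c: "conf g z" and r: "reduces_minus n u g"
  then obtain e :: int where e: "e \<in> {1,-1}" "natvec (\<lambda>i. negpart g i + e * u i)"
    "norm1 n (\<lambda>i. pospart g i - (negpart g i + e * u i)) < norm1 n g"
    unfolding reduces_minus_def by blast
  have "natvec (\<lambda>i. negpart z i + e * u i)"
    unfolding natvec_def
  proof
    fix i
    from c have "(0 \<le> g i \<and> g i \<le> z i) \<or> (z i \<le> g i \<and> g i \<le> 0)" unfolding conf_def by blast
    moreover have "0 \<le> negpart g i + e * u i" using e(2) unfolding natvec_def by blast
    ultimately show "0 \<le> negpart z i + e * u i" unfolding negpart_def by linarith
  qed
  moreover have "norm1 n (\<lambda>i. pospart z i - (negpart z i + e * u i)) < norm1 n z"
  proof -
    have "norm1 n (\<lambda>i. g i + - (e * u i)) < norm1 n g"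
      using e(3) by (simp only: pm1 pm2)
    from norm_bound[OF c this] show ?thesis by (simp only: pm1 pm2)
  qed
  ultimately show ?thesis using e(1) unfolding reduces_minus_def by blast
qed

lemma graver_sub: "graver d n A \<subseteq> kerA d n A" unfolding graver_def by blast

theorem theorem7p4:
  fixes d n :: nat and A :: "nat \<Rightarrow> nat \<Rightarrow> int" and B :: "(nat \<Rightarrow> int) set"
  assumes pointed: "\<forall>z\<in>kerA d n A. natvec z \<longrightarrow> z = 0"
    and B: "B \<subseteq> kerA d n A"
  shows "(reduces_distance n B (kerA d n A) \<longleftrightarrow> reduces_distance n B (graver d n A))
       \<and> (strongly_reduces_distance n B (kerA d n A) \<longleftrightarrow> strongly_reduces_distance n B (graver d n A))"
proof (intro conjI iffI)
  show "reduces_distance n B (kerA d n A) \<Longrightarrow> reduces_distance n B (graver d n A)"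
    using graver_sub unfolding reduces_distance_def by blast
  show "strongly_reduces_distance n B (kerA d n A) \<Longrightarrow> strongly_reduces_distance n B (graver d n A)"
    using graver_sub unfolding strongly_reduces_distance_def by blast
  show "reduces_distance n B (graver d n A) \<Longrightarrow> reduces_distance n B (kerA d n A)"
    unfolding reduces_distance_def
  proof (intro ballI impI)
    fix z assume h: "\<forall>z\<in>graver d n A. z \<noteq> 0 \<longrightarrow> (\<exists>u\<in>B. reduces_plus n u z \<or> reduces_minus n u z)"
      and z: "z \<in> kerA d n A" "z \<noteq> 0"
    from exists_graver[OF z] obtain g where g: "g \<in> graver d n A" "conf g z" by blast
    have "g \<noteq> 0" using g(1) unfolding graver_def by blast
    with h g show "\<exists>u\<in>B. reduces_plus n u z \<or> reduces_minus n u z" using red_plus red_minus by blast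
  qed
  show "strongly_reduces_distance n B (graver d n A) \<Longrightarrow> strongly_reduces_distance n B (kerA d n A)"
    unfolding strongly_reduces_distance_def
  proof (intro ballI impI)
    fix z assume h: "\<forall>z\<in>graver d n A. z \<noteq> 0 \<longrightarrow> (\<exists>u\<in>B. reduces_plus n u z) \<and> (\<exists>u'\<in>B. reduces_minus n u' z)"
      and z: "z \<in> kerA d n A" "z \<noteq> 0"
    from exists_graver[OF z] obtain g where g: "g \<in> graver d n A" "conf g z" by blast
    have "g \<noteq> 0" using g(1) unfolding graver_def by blast
    with h g show "(\<exists>u\<in>B. reduces_plus n u z) \<and> (\<exists>u'\<in>B. reduces_minus n u' z)" using red_plus red_minus by blast
  qed
qed

end
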